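(* Let $G$ be a group with Property RD with respect to a length function $l$ such that no conjugacy class $C(g)$ with $g\ne e$ grows polynomially (for each such $g$ and every polynomial $P$ there are infinitely many $m$ with $|\{h\in C(g):l(h)=m\}|>P(m)$). Then every bounded trace on $C^*_{\mathrm{red}}G$ is a scalar multiple of the canonical trace $\sum c_g g\mapsto c_e$.
   Context: A length function on $G$ is $l:G\to\mathbb{Z}_{\ge0}$ with $l(fg)\le l(f)+l(g)$, $l(g^{-1})=l(g)$, $l(e)=0$, and $l^{-1}(S)$ finite for finite $S$. $\|\sum c_g g\|_{H^s}^2=\sum|c_g|^2(1+l(g))^{2s}$. $G$ has Property RD with respect to $l$ if there are constants $C,s$ with $\|x\|_{C^*_{\mathrm{red}}G}\le C\|x\|_{H^s}$ for all $x\in\mathbb{C}G$. $C(g)$ is the conjugacy class of $g$. A trace is a bounded linear functional $\tau$ with $\tau(ab)=\tau(ba)$. *)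

theory Defs
  imports Complex_Main "HOL-Computational_Algebra.Polynomial"
begin

text \<open>The group G is a type of class group_add (not necessarily commutative):
  the group product f g is written f + g, the identity e is 0, the inverse is - g.
  Elements of the group ring CG are finitely supported functions G to complex.\<close>

definition supp :: "('g \<Rightarrow> complex) \<Rightarrow> 'g set" where
  "supp x = {g. x g \<noteq> 0}"

definition finsupp :: "('g \<Rightarrow> complex) \<Rightarrow> bool" where
  "finsupp x \<longleftrightarrow> finite (supp x)"

text \<open>Convolution product in CG (also the left regular action of CG on finitely
  supported vectors of l2(G)): (x*y)(g) = sum_h x(h) y(h^-1 g).\<close>
definition conv :: "('g::group_add \<Rightarrow> complex) \<Rightarrow> ('g \<Rightarrow> complex) \<Rightarrow> 'g \<Rightarrow> complex" where
  "conv x y = (\<lambda>g. \<Sum>h\<in>supp x. x h * y (- h + g))"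

definition l2norm :: "('g \<Rightarrow> complex) \<Rightarrow> real" where
  "l2norm \<xi> = sqrt (\<Sum>g\<in>supp \<xi>. (cmod (\<xi> g))\<^sup>2)"

text \<open>Reduced C*-norm: operator norm of left convolution on l2(G), computed on the
  dense subspace of finitely supported vectors.\<close>
definition red_norm :: "('g::group_add \<Rightarrow> complex) \<Rightarrow> real" where
  "red_norm x = Sup {l2norm (conv x \<xi>) | \<xi>. finsupp \<xi> \<and> l2norm \<xi> \<le> 1}"

definition length_function :: "('g::group_add \<Rightarrow> nat) \<Rightarrow> bool" where
  "length_function l \<longleftrightarrow>
     (\<forall>f g. l (f + g) \<le> l f + l g) \<and> (\<forall>g. l (- g) = l g) \<and> l 0 = 0 \<and>
     (\<forall>S. finite S \<longrightarrow> finite (l -` S))"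

definition Hs_norm :: "('g \<Rightarrow> nat) \<Rightarrow> real \<Rightarrow> ('g \<Rightarrow> complex) \<Rightarrow> real" where
  "Hs_norm l s x = sqrt (\<Sum>g\<in>supp x. (cmod (x g))\<^sup>2 * (1 + real (l g)) powr (2 * s))"

definition property_RD :: "('g::group_add \<Rightarrow> nat) \<Rightarrow> bool" where
  "property_RD l \<longleftrightarrow> (\<exists>C s. \<forall>x. finsupp x \<longrightarrow> red_norm x \<le> C * Hs_norm l s x)"

definition conj_class :: "'g::group_add \<Rightarrow> 'g set" where
  "conj_class g = {h + g - h | h. True}"

text \<open>A bounded trace on the reduced C*-algebra, described through its restriction to
  the dense subalgebra CG: a linear functional, bounded for the reduced norm, tracial.\<close>
definition bounded_trace :: "(('g::group_add \<Rightarrow> complex) \<Rightarrow> complex) \<Rightarrow> bool" where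
  "bounded_trace \<tau> \<longleftrightarrow>
     (\<forall>x y. finsupp x \<longrightarrow> finsupp y \<longrightarrow> \<tau> (\<lambda>g. x g + y g) = \<tau> x + \<tau> y) \<and>
     (\<forall>c x. finsupp x \<longrightarrow> \<tau> (\<lambda>g. c * x g) = c * \<tau> x) \<and>
     (\<exists>K. \<forall>x. finsupp x \<longrightarrow> cmod (\<tau> x) \<le> K * red_norm x) \<and>
     (\<forall>x y. finsupp x \<longrightarrow> finsupp y \<longrightarrow> \<tau> (conv x y) = \<tau> (conv y x))"

end

theory Submission
  imports Defs
begin

definition delta :: "'g \<Rightarrow> 'g \<Rightarrow> complex" where
  "delta a = (\<lambda>k. if k = a then 1 else 0)"

lemma supp_delta[simp]: "supp (delta a) = {a}"
  by (auto simp: supp_def delta_def)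

lemma finsupp_delta[simp]: "finsupp (delta a)"
  by (simp add: finsupp_def)

lemma conv_delta: "conv (delta a) y = (\<lambda>k. y (- a + k))"
  by (simp add: conv_def fun_eq_iff) (simp add: delta_def)

lemma conv_delta_delta: "conv (delta a) (delta b) = delta ((a::'g::group_add) + b)"
proof -
  have "(- a + k = b) = (k = a + b)" for k
    by (metis add.assoc add_minus_cancel minus_add_cancel)
  then show ?thesis unfolding conv_delta by (auto simp: delta_def fun_eq_iff)
qed

lemma finsupp_sum:
  assumes "finite F" "\<And>i. i \<in> F \<Longrightarrow> finsupp (f i)"
  shows "finsupp (\<lambda>k. \<Sum>i\<in>F. f i k)"
proof -
  have "supp (\<lambda>k. \<Sum>i\<in>F. f i k) \<subseteq> (\<Union>i\<in>F. supp (f i))"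
    by (auto simp: supp_def intro: ccontr)
  moreover have "finite (\<Union>i\<in>F. supp (f i))" using assms by (auto simp: finsupp_def)
  ultimately show ?thesis unfolding finsupp_def by (rule finite_subset)
qed

lemma trace_zero:
  assumes "bounded_trace \<tau>"
  shows "\<tau> (\<lambda>k. 0) = 0"
proof -
  have "finsupp (\<lambda>k::'a. 0::complex)" by (simp add: finsupp_def supp_def)
  then have "\<tau> (\<lambda>g. 0 * (\<lambda>k::'a. 0::complex) g) = 0 * \<tau> (\<lambda>k. 0)"
    using assms unfolding bounded_trace_def by blast
  then show ?thesis by simp
qed

lemma trace_sum:
  assumes "bounded_trace \<tau>" "finite F" "\<And>i. i \<in> F \<Longrightarrow> finsupp (f i)"
  shows "\<tau> (\<lambda>k. \<Sum>i\<in>F. f i k) = (\<Sum>i\<in>F. \<tau> (f i))"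
  using assms(2,3)
proof (induction F rule: finite_induct)
  case empty
  then show ?case using trace_zero[OF assms(1)] by simp
next
  case (insert a F)
  have "\<tau> (\<lambda>k. \<Sum>i\<in>insert a F. f i k) = \<tau> (\<lambda>k. f a k + (\<Sum>i\<in>F. f i k))"
    using insert by simp
  also have "\<dots> = \<tau> (f a) + \<tau> (\<lambda>k. \<Sum>i\<in>F. f i k)"
    using assms(1) insert finsupp_sum[of F f] unfolding bounded_trace_def by auto
  finally show ?case using insert by simp
qed

lemma trace_smult:
  assumes "bounded_trace \<tau>" "finsupp x"
  shows "\<tau> (\<lambda>g. c * x g) = c * \<tau> x"
  using assms unfolding bounded_trace_def by blast

lemma trace_conj:
  assumes "bounded_trace \<tau>"
  shows "\<tau> (delta (h + g - h)) = \<tau> (delta (g::'g::group_add))"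
proof -
  have "delta (h + g - h) = conv (delta h) (delta (g - h))"
    unfolding conv_delta_delta by (simp only: diff_conv_add_uminus add.assoc)
  then have "\<tau> (delta (h + g - h)) = \<tau> (conv (delta (g - h)) (delta h))"
    using assms unfolding bounded_trace_def by simp
  also have "conv (delta (g - h)) (delta h) = delta g"
    by (simp add: conv_delta_delta)
  finally show ?thesis .
qed

lemma red_norm_delta0: "red_norm (delta (0::'g::group_add)) = 1"
proof -
  have c: "conv (delta 0) \<xi> = \<xi>" for \<xi> :: "'g \<Rightarrow> complex"
    by (simp add: conv_delta)
  have l1: "l2norm (delta (0::'g)) = 1" by (simp add: l2norm_def) (simp add: delta_def)
  show ?thesis unfolding red_norm_def c
    by (rule cSup_eq_maximum) (use l1 in force)+
qed

lemma sum_delta_ind: "finite S \<Longrightarrow> (\<Sum>h\<in>S. delta h k) = (if k \<in> S then 1 else 0)"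
  by (simp add: delta_def)

lemma trace_delta_nonzero:
  fixes l :: "'g::group_add \<Rightarrow> nat"
    and \<tau> :: "('g \<Rightarrow> complex) \<Rightarrow> complex"
  assumes lf: "length_function l"
    and rd: "property_RD l"
    and gr: "\<forall>g. g \<noteq> 0 \<longrightarrow> (\<forall>P :: real poly.
            infinite {m :: nat. real (card {h \<in> conj_class g. l h = m}) > poly P (real m)})"
    and tr: "bounded_trace \<tau>"
    and g0: "g \<noteq> 0"
  shows "\<tau> (delta g) = 0"
proof (rule ccontr)
  assume t0: "\<tau> (delta g) \<noteq> 0"
  define t where "t = \<tau> (delta g)"
  obtain K where K: "\<And>x. finsupp x \<Longrightarrow> cmod (\<tau> x) \<le> K * red_norm x"
    using tr unfolding bounded_trace_def by blast
  have "cmod (\<tau> (delta 0)) \<le> K" using K[of "delta 0"] by (simp add: red_norm_delta0)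
  then have K0: "K \<ge> 0" by (meson norm_ge_zero order_trans)
  obtain C s where Cs: "\<And>x. finsupp x \<Longrightarrow> red_norm x \<le> C * Hs_norm l s x"
    using rd unfolding property_RD_def by blast
  define D where "D = max (K * C) 0"
  define S where "S m = {h \<in> conj_class g. l h = m}" for m
  define N where "N m = card (S m)" for m
  define k where "k = nat \<lceil>2 * s\<rceil>"
  define A where "A = D^2 / (cmod t)^2"
  have ct: "cmod t > 0" using t0 t_def by simp
  have fin: "finite (S m)" for m
  proof -
    have "finite (l -` {m})" using lf unfolding length_function_def by blast
    moreover have "S m \<subseteq> l -` {m}" unfolding S_def by auto
    ultimately show ?thesis by (meson finite_subset)
  qed
  have bound: "real (N m) \<le> A * (1 + real m) ^ k" for m
  proof -
    define x where "x = (\<lambda>j. \<Sum>h\<in>S m. delta h j)"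
    have fx: "finsupp x" unfolding x_def by (rule finsupp_sum) (auto simp: fin)
    have tx: "\<tau> x = of_nat (N m) * t"
    proof -
      have "\<tau> x = (\<Sum>h\<in>S m. \<tau> (delta h))"
        unfolding x_def by (rule trace_sum[OF tr fin]) simp
      also have "\<dots> = (\<Sum>h\<in>S m. t)"
      proof (rule sum.cong)
        fix h assume "h \<in> S m"
        then obtain a where "h = a + g - a" unfolding S_def conj_class_def by auto
        then show "\<tau> (delta h) = t" using trace_conj[OF tr] t_def by simp
      qed simp
      finally show ?thesis by (simp add: N_def)
    qed
    have xv: "x = (\<lambda>j. if j \<in> S m then 1 else 0)"
      unfolding x_def using sum_delta_ind[OF fin] by auto
    have suppx: "supp x = S m" unfolding xv supp_def by auto
    define p where "p = (1 + real m) powr s"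
    have p0: "p > 0" unfolding p_def by simp
    have p2: "(1 + real m) powr (2 * s) = p^2"
      unfolding p_def power2_eq_square by (simp add: powr_add[symmetric])
    have Hs: "Hs_norm l s x = sqrt (real (N m)) * p"
    proof -
      have "Hs_norm l s x = sqrt (\<Sum>h\<in>S m. p^2)"
        unfolding Hs_norm_def suppx
        by (rule arg_cong[where f=sqrt], rule sum.cong) (auto simp: xv S_def p2)
      also have "\<dots> = sqrt (real (N m)) * p"
        using p0 by (simp add: N_def real_sqrt_mult)
      finally show ?thesis .
    qed
    have "real (N m) * cmod t = cmod (\<tau> x)" by (simp add: tx norm_mult)
    also have "\<dots> \<le> K * red_norm x" by (rule K[OF fx])
    also have "\<dots> \<le> K * (C * Hs_norm l s x)" using Cs[OF fx] K0 by (rule mult_left_mono)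
    also have "\<dots> = (K * C) * (sqrt (real (N m)) * p)" by (simp add: Hs)
    also have "\<dots> \<le> D * (sqrt (real (N m)) * p)"
      unfolding D_def using p0 by (intro mult_right_mono) auto
    finally have ineq: "real (N m) * cmod t \<le> D * (sqrt (real (N m)) * p)" .
    have D0: "D \<ge> 0" unfolding D_def by simp
    have sq: "real (N m) * (cmod t)^2 \<le> D^2 * p^2"
    proof (cases "N m = 0")
      case True then show ?thesis by simp
    next
      case False
      have "(real (N m) * cmod t)^2 \<le> (D * (sqrt (real (N m)) * p))^2"
        using ineq ct by (intro power_mono) auto
      then have "real (N m) * (real (N m) * (cmod t)^2) \<le> real (N m) * (D^2 * p^2)"
        by (simp add: power_mult_distrib algebra_simps power2_eq_square)
      then show ?thesis using False by simp
    qed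
    have pk: "p^2 \<le> (1 + real m) ^ k"
    proof -
      have "(1 + real m) powr (2 * s) \<le> (1 + real m) powr (real k)"
        unfolding k_def by (intro powr_mono) linarith+
      also have "\<dots> = (1 + real m) ^ k" by (simp add: powr_realpow)
      finally show ?thesis using p2 by simp
    qed
    have "real (N m) \<le> D^2 * p^2 / (cmod t)^2"
      using sq ct by (simp add: field_simps)
    also have "\<dots> \<le> D^2 * (1 + real m) ^ k / (cmod t)^2"
      using pk by (intro divide_right_mono mult_left_mono) auto
    finally show ?thesis by (simp add: A_def)
  qed
  define P where "P = smult A ([:1, 1:] ^ k)"
  have "poly P (real m) = A * (1 + real m) ^ k" for m
    by (simp add: P_def poly_power)
  then have "{m :: nat. real (card {h \<in> conj_class g. l h = m}) > poly P (real m)} = {}"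
    using bound by (auto simp: N_def S_def not_less)
  then show False using gr g0 by (metis finite.emptyI)
qed

theorem mainTheorem8:
  fixes l :: "'g::group_add \<Rightarrow> nat"
    and \<tau> :: "('g \<Rightarrow> complex) \<Rightarrow> complex"
  assumes "length_function l"
    and "property_RD l"
    and "\<forall>g. g \<noteq> 0 \<longrightarrow> (\<forall>P :: real poly.
            infinite {m :: nat. real (card {h \<in> conj_class g. l h = m}) > poly P (real m)})"
    and "bounded_trace \<tau>"
  shows "\<exists>c :: complex. \<forall>x. finsupp x \<longrightarrow> \<tau> x = c * x 0"
proof (intro exI allI impI)
  fix x :: "'g \<Rightarrow> complex" assume fx: "finsupp x"
  have fs: "finite (supp x)" using fx by (simp add: finsupp_def)
  have xe: "x = (\<lambda>k. \<Sum>g\<in>supp x. x g * delta g k)"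
  proof
    fix k show "x k = (\<Sum>g\<in>supp x. x g * delta g k)"
    proof -
      have "(\<Sum>g\<in>supp x. x g * delta g k) = (\<Sum>g\<in>supp x. if k = g then x g else 0)"
        by (rule sum.cong) (auto simp: delta_def)
      also have "\<dots> = x k" using fs by (simp add: supp_def)
      finally show ?thesis by simp
    qed
  qed
  have "\<tau> x = (\<Sum>g\<in>supp x. \<tau> (\<lambda>k. x g * delta g k))"
    by (subst xe, rule trace_sum[OF assms(4) fs]) (simp add: finsupp_def supp_def delta_def)
  also have "\<dots> = (\<Sum>g\<in>supp x. if g = 0 then x 0 * \<tau> (delta 0) else 0)"
    by (rule sum.cong) (auto simp: trace_smult[OF assms(4)] trace_delta_nonzero[OF assms])
  also have "\<dots> = \<tau> (delta 0) * x 0"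
    using fs by (simp add: supp_def)
  finally show "\<tau> x = \<tau> (delta 0) * x 0" .
qed

end
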